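(* The subalgebra $\mathcal{B}^{\mp}\subset\mathrm{Y}^{\mp}(2)$ generated by the center $Z\mathrm{Y}^{\mp}(2)$ and all coefficients of the series $\sigma_1(u,F_{11})$ coincides with the subalgebra generated by $Z\mathrm{Y}^{\mp}(2)$ and the elements $s_{11}^{(2m+1)}$, $m\in\mathbb{Z}_{\ge0}$.
   Context: $\mathrm{Y}(2)$ is the algebra generated by $t^{(r)}_{ij}$, $i,j\in\{-1,1\}$, $r\ge1$, with relations $[t^{(r+1)}_{ij},t^{(s)}_{kl}]-[t^{(r)}_{ij},t^{(s+1)}_{kl}]=t^{(r)}_{kj}t^{(s)}_{il}-t^{(s)}_{kj}t^{(r)}_{il}$, $t^{(0)}_{ij}=\delta_{ij}$; $t_{ij}(u)=\sum_{r\ge0}t^{(r)}_{ij}u^{-r}$. In the symplectic case (sign $-$) $\theta_{ij}=\mathrm{sgn}(i)\mathrm{sgn}(j)$, in the orthogonal case (sign $+$) $\theta_{ij}=1$. Put $s_{ij}(u)=\sum_{a\in\{\pm1\}}\theta_{aj}t_{ia}(u)t_{-j,-a}(-u)=\delta_{ij}+\sum_{M\ge1}s^{(M)}_{ij}u^{-M}$; $\mathrm{Y}^{\mp}(2)$ is the subalgebra of $\mathrm{Y}(2)$ generated by all $s^{(M)}_{ij}$, and $Z\mathrm{Y}^{\mp}(2)$ its center. Let $W=\mathbb{C}^2$ with basis $e_{-1},e_1$, $E_{ij}$ the matrix units, transposition $E_{ij}^t=\theta_{ij}E_{-j,-i}$, $S(u)=\sum_{i,j}s_{ij}(u)\otimes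 E_{ij}$, $P=\sum_{i,j}E_{ij}\otimes E_{ji}$, $A_2=\frac12(1-P)$ on $W^{\otimes2}$, $F_{11}=E_{11}-E_{-1,-1}$. Then $\sigma_1(u,F_{11})=\mathrm{tr}\big[A_2\, S_1(u)\,\big(1-\tfrac{1}{3-2u}\sum_{i,j}E^t_{ij}\otimes E_{ji}\big)\,(F_{11})_2\big]$, where $S_1(u)$ acts on the first and $(F_{11})_2$ on the second tensor factor, the trace is over $W^{\otimes 2}$, and $\sigma_1$ is expanded as a series in $u^{-1}$ with coefficients in $\mathrm{Y}^{\mp}(2)$ (this $\mathcal{B}^{\mp}$ is the Bethe subalgebra for $C=F_{11}$). *)

theory Defs
  imports Complex_Main
begin

text \<open>Generators t^(r)_ij are encoded as triples (i,j,r) with i,j in {-1,1}, r >= 1.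
  Elements of the free algebra are finitely supported functions from words
  (lists of generators) to complex numbers; multiplication is concatenation.\<close>

type_synonym gen = "int \<times> int \<times> nat"
type_synonym fa = "gen list \<Rightarrow> complex"

definition idx :: "int set" where "idx = {-1, 1}"

definition gens :: "gen set" where
  "gens = {(i, j, r). i \<in> idx \<and> j \<in> idx \<and> r \<ge> 1}"

definition fpoly :: "fa set" where
  "fpoly = {p. finite {w. p w \<noteq> 0} \<and> (\<forall>w. p w \<noteq> 0 \<longrightarrow> set w \<subseteq> gens)}"

definition pzero :: fa where "pzero = (\<lambda>w. 0)"
definition pone :: fa where "pone = (\<lambda>w. if w = [] then 1 else 0)"
definition pgen :: "gen \<Rightarrow> fa" where "pgen g = (\<lambda>w. if w = [g] then 1 else 0)"
definition padd :: "fa \<Rightarrow> fa \<Rightarrow> fa" where "padd p q = (\<lambda>w. p w + q w)"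
definition psmul :: "complex \<Rightarrow> fa \<Rightarrow> fa" where "psmul c p = (\<lambda>w. c * p w)"
definition psub :: "fa \<Rightarrow> fa \<Rightarrow> fa" where "psub p q = (\<lambda>w. p w - q w)"
definition psum :: "('b \<Rightarrow> fa) \<Rightarrow> 'b set \<Rightarrow> fa" where
  "psum F A = (\<lambda>w. \<Sum>x\<in>A. F x w)"
definition pmul :: "fa \<Rightarrow> fa \<Rightarrow> fa" where
  "pmul p q = (\<lambda>w. \<Sum>k\<le>length w. p (take k w) * q (drop k w))"

definition comm :: "fa \<Rightarrow> fa \<Rightarrow> fa" where "comm a b = psub (pmul a b) (pmul b a)"

definition tt :: "int \<Rightarrow> int \<Rightarrow> nat \<Rightarrow> fa" where
  "tt i j r = (if r = 0 then (if i = j then pone else pzero) else pgen (i, j, r))"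

definition yrel :: "int \<Rightarrow> int \<Rightarrow> int \<Rightarrow> int \<Rightarrow> nat \<Rightarrow> nat \<Rightarrow> fa" where
  "yrel i j k l r s =
     psub (psub (comm (tt i j (r + 1)) (tt k l s)) (comm (tt i j r) (tt k l (s + 1))))
          (psub (pmul (tt k j r) (tt i l s)) (pmul (tt k j s) (tt i l r)))"

definition relators :: "fa set" where
  "relators = {yrel i j k l r s | i j k l r s. i \<in> idx \<and> j \<in> idx \<and> k \<in> idx \<and> l \<in> idx}"

inductive_set yideal :: "fa set" where
  zero: "pzero \<in> yideal"
| rel: "\<rho> \<in> relators \<Longrightarrow> \<rho> \<in> yideal"
| add: "p \<in> yideal \<Longrightarrow> q \<in> yideal \<Longrightarrow> padd p q \<in> yideal"
| smul: "p \<in> yideal \<Longrightarrow> psmul c p \<in> yideal"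
| lmul: "a \<in> fpoly \<Longrightarrow> p \<in> yideal \<Longrightarrow> pmul a p \<in> yideal"
| rmul: "a \<in> fpoly \<Longrightarrow> p \<in> yideal \<Longrightarrow> pmul p a \<in> yideal"

inductive_set falg :: "fa set \<Rightarrow> fa set" for X :: "fa set" where
  one: "pone \<in> falg X"
| gen: "x \<in> X \<Longrightarrow> x \<in> falg X"
| add: "p \<in> falg X \<Longrightarrow> q \<in> falg X \<Longrightarrow> padd p q \<in> falg X"
| smul: "p \<in> falg X \<Longrightarrow> psmul c p \<in> falg X"
| mul: "p \<in> falg X \<Longrightarrow> q \<in> falg X \<Longrightarrow> pmul p q \<in> falg X"

text \<open>The subalgebra of Y(2) = free algebra / yideal generated by (the images of) X,
  represented by the set of all its representatives in the free algebra.\<close>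
definition ygen :: "fa set \<Rightarrow> fa set" where
  "ygen X = {p \<in> fpoly. \<exists>q \<in> falg X. psub p q \<in> yideal}"

text \<open>A series is given by its coefficients: n-th entry = coefficient of u^{-n}.\<close>
type_synonym ser = "nat \<Rightarrow> fa"

definition ser_sum :: "('b \<Rightarrow> ser) \<Rightarrow> 'b set \<Rightarrow> ser" where
  "ser_sum F A = (\<lambda>n. psum (\<lambda>x. F x n) A)"
definition ser_mul :: "ser \<Rightarrow> ser \<Rightarrow> ser" where
  "ser_mul A B = (\<lambda>n. psum (\<lambda>m. pmul (A m) (B (n - m))) {..n})"
definition ser_smul :: "complex \<Rightarrow> ser \<Rightarrow> ser" where
  "ser_smul c A = (\<lambda>n. psmul c (A n))"
definition cser :: "(nat \<Rightarrow> complex) \<Rightarrow> ser" where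
  "cser f = (\<lambda>n. psmul (f n) pone)"

text \<open>theta_ij: sympl = True is the symplectic case (sign -), False the orthogonal (sign +).\<close>
definition theta :: "bool \<Rightarrow> int \<Rightarrow> int \<Rightarrow> complex" where
  "theta sympl i j = (if sympl then of_int (sgn i * sgn j) else 1)"

definition tser :: "int \<Rightarrow> int \<Rightarrow> ser" where "tser i j = (\<lambda>r. tt i j r)"
text \<open>t_ij(-u)\<close>
definition tnser :: "int \<Rightarrow> int \<Rightarrow> ser" where "tnser i j = (\<lambda>r. psmul ((-1) ^ r) (tt i j r))"

definition sser :: "bool \<Rightarrow> int \<Rightarrow> int \<Rightarrow> ser" where
  "sser sympl i j = ser_sum (\<lambda>a. ser_smul (theta sympl a j) (ser_mul (tser i a) (tnser (- j) (- a)))) idx"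

definition Sgens :: "bool \<Rightarrow> fa set" where
  "Sgens sympl = {sser sympl i j M | i j M. i \<in> idx \<and> j \<in> idx \<and> M \<ge> 1}"

definition Ypm :: "bool \<Rightarrow> fa set" where "Ypm sympl = ygen (Sgens sympl)"

definition ZYpm :: "bool \<Rightarrow> fa set" where
  "ZYpm sympl = {z \<in> Ypm sympl. \<forall>x \<in> Ypm sympl. comm z x \<in> yideal}"

text \<open>Matrices on W (x) W with basis e_a (x) e_b, indices (a,b) in idx x idx.\<close>
type_synonym cmat2 = "int \<Rightarrow> int \<Rightarrow> complex"
type_synonym cmat4 = "int \<times> int \<Rightarrow> int \<times> int \<Rightarrow> complex"
type_synonym smat4 = "int \<times> int \<Rightarrow> int \<times> int \<Rightarrow> ser"

definition Emat :: "int \<Rightarrow> int \<Rightarrow> cmat2" where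
  "Emat i j = (\<lambda>a b. if a = i \<and> b = j then 1 else 0)"
definition Id2 :: cmat2 where "Id2 = (\<lambda>a b. if a = b then 1 else 0)"
definition tens :: "cmat2 \<Rightarrow> cmat2 \<Rightarrow> cmat4" where
  "tens X Y = (\<lambda>p q. X (fst p) (fst q) * Y (snd p) (snd q))"
definition Id4 :: cmat4 where "Id4 = (\<lambda>p q. if p = q then 1 else 0)"
definition Pmat :: cmat4 where
  "Pmat = (\<lambda>p q. \<Sum>i\<in>idx. \<Sum>j\<in>idx. tens (Emat i j) (Emat j i) p q)"
definition A2 :: cmat4 where "A2 = (\<lambda>p q. (Id4 p q - Pmat p q) / 2)"
definition Etr :: "bool \<Rightarrow> int \<Rightarrow> int \<Rightarrow> cmat2" where
  "Etr sympl i j = (\<lambda>a b. theta sympl i j * Emat (- j) (- i) a b)"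
definition Qmat :: "bool \<Rightarrow> cmat4" where
  "Qmat sympl = (\<lambda>p q. \<Sum>i\<in>idx. \<Sum>j\<in>idx. tens (Etr sympl i j) (Emat j i) p q)"
definition F11 :: cmat2 where "F11 = (\<lambda>a b. Emat 1 1 a b - Emat (-1) (-1) a b)"
definition F11_2 :: cmat4 where "F11_2 = tens Id2 F11"

text \<open>Coefficients of the expansion of 1/(3-2u) in u^{-1}:
  1/(3-2u) = - sum_{n>=1} 3^(n-1)/2^n u^{-n}.\<close>
definition cc :: "nat \<Rightarrow> complex" where
  "cc n = (if n = 0 then 0 else - (3 ^ (n - 1) / 2 ^ n))"

definition liftc :: "cmat4 \<Rightarrow> smat4" where
  "liftc X = (\<lambda>p q. cser (\<lambda>n. if n = 0 then X p q else 0))"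

definition Mfac :: "bool \<Rightarrow> smat4" where
  "Mfac sympl = (\<lambda>p q. cser (\<lambda>n. (if n = 0 then Id4 p q else 0) - cc n * Qmat sympl p q))"

definition S1 :: "bool \<Rightarrow> smat4" where
  "S1 sympl = (\<lambda>p q. if snd p = snd q then sser sympl (fst p) (fst q) else (\<lambda>n. pzero))"

definition idx2 :: "(int \<times> int) set" where "idx2 = idx \<times> idx"

definition mmul :: "smat4 \<Rightarrow> smat4 \<Rightarrow> smat4" where
  "mmul X Y = (\<lambda>p q. ser_sum (\<lambda>r. ser_mul (X p r) (Y r q)) idx2)"
definition mtr :: "smat4 \<Rightarrow> ser" where
  "mtr X = ser_sum (\<lambda>p. X p p) idx2"

definition sigma1 :: "bool \<Rightarrow> ser" where
  "sigma1 sympl = mtr (mmul (mmul (mmul (liftc A2) (S1 sympl)) (Mfac sympl)) (liftc F11_2))"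

end

theory Submission
  imports Defs
begin


lemma sum_atMost_rev: "(\<Sum>i\<le>(M::nat). f i) = (\<Sum>i\<le>M. f (M - i))"
  by (rule sum.reindex_bij_witness[where i="\<lambda>i. M - i" and j="\<lambda>i. M - i"]) auto

lemma psum_apply[simp]: "psum F A w = (\<Sum>x\<in>A. F x w)" by (simp add: psum_def)
lemma padd_apply[simp]: "padd p q w = p w + q w" by (simp add: padd_def)
lemma psub_apply[simp]: "psub p q w = p w - q w" by (simp add: psub_def)
lemma psmul_apply[simp]: "psmul c p w = c * p w" by (simp add: psmul_def)
lemma pzero_apply[simp]: "pzero w = 0" by (simp add: pzero_def)

lemma pmul_psmul_right: "pmul p (psmul c q) = psmul c (pmul p q)"
  by (rule ext) (simp add: pmul_def sum_distrib_left algebra_simps)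
lemma pmul_psmul_left: "pmul (psmul c p) q = psmul c (pmul p q)"
  by (rule ext) (simp add: pmul_def sum_distrib_left algebra_simps)
lemma pmul_pone_left[simp]: "pmul pone q = q"
proof (rule ext)
  fix w :: "gen list"
  have "pmul pone q w = (\<Sum>k\<le>length w. (if k = 0 then q w else 0))"
    unfolding pmul_def by (rule sum.cong) (auto simp: pone_def)
  also have "\<dots> = q w" by (simp add: sum.delta)
  finally show "pmul pone q w = q w" .
qed
lemma pmul_pone_right[simp]: "pmul q pone = q"
proof (rule ext)
  fix w :: "gen list"
  have "pmul q pone w = (\<Sum>k\<le>length w. (if k = length w then q w else 0))"
    unfolding pmul_def by (rule sum.cong) (auto simp: pone_def)
  also have "\<dots> = q w" by (simp add: sum.delta)
  finally show "pmul q pone w = q w" .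
qed
lemma pmul_pzero_left[simp]: "pmul pzero q = pzero"
  by (rule ext) (simp add: pmul_def)
lemma pmul_pzero_right[simp]: "pmul q pzero = pzero"
  by (rule ext) (simp add: pmul_def)
lemma pmul_psum_left: "pmul (psum F A) q = psum (\<lambda>x. pmul (F x) q) A"
  by (rule ext) (simp add: pmul_def sum_distrib_right sum_distrib_left psum_def sum.swap[of _ A])
lemma pmul_padd_left: "pmul (padd p p') q = padd (pmul p q) (pmul p' q)"
  by (rule ext) (simp add: pmul_def algebra_simps sum.distrib)
lemma pmul_padd_right: "pmul q (padd p p') = padd (pmul q p) (pmul q p')"
  by (rule ext) (simp add: pmul_def algebra_simps sum.distrib)
lemma pmul_psub_left: "pmul (psub p p') q = psub (pmul p q) (pmul p' q)"
  by (rule ext) (simp add: pmul_def algebra_simps sum_subtractf)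
lemma pmul_psub_right: "pmul q (psub p p') = psub (pmul q p) (pmul q p')"
  by (rule ext) (simp add: pmul_def algebra_simps sum_subtractf)


definition ff :: "bool \<Rightarrow> nat \<Rightarrow> complex" where
  "ff sympl k = (if k = 0 then - 1/2 else 0) + (if sympl then 0 else cc k)"

definition Mc :: "bool \<Rightarrow> nat \<Rightarrow> cmat4" where
  "Mc sympl k = (\<lambda>p q. (if k = 0 then Id4 p q else 0) - cc k * Qmat sympl p q)"

lemma idx2_eq: "idx2 = {(-1,-1),(-1,1),(1,-1),(1,1)}"
  by (auto simp: idx2_def idx_def)

lemma key_scalar:
  fixes x :: "int \<Rightarrow> int \<Rightarrow> complex"
  shows "(\<Sum>p\<in>idx2. \<Sum>r\<in>idx2. F11_2 r p * (\<Sum>s\<in>idx2. Mc sympl k s r *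
            (\<Sum>t\<in>idx2. A2 p t * (if snd t = snd s then x (fst t) (fst s) else 0))))
         = ff sympl k * (x 1 1 - x (-1) (-1))"
  by (cases sympl; simp add: idx2_eq Mc_def ff_def A2_def Id4_def Pmat_def Qmat_def F11_2_def
      tens_def Emat_def Etr_def theta_def F11_def Id2_def idx_def algebra_simps)


lemma ser_mul_cser_left: "ser_mul (cser f) B n = psum (\<lambda>m. psmul (f m) (B (n - m))) {..n}"
  by (simp add: ser_mul_def cser_def pmul_psmul_left)
lemma ser_mul_cser_right: "ser_mul B (cser f) n = psum (\<lambda>m. psmul (f (n - m)) (B m)) {..n}"
  by (simp add: ser_mul_def cser_def pmul_psmul_right)

lemma ser_mul_liftc_left: "ser_mul (liftc X p q) B n = psmul (X p q) (B n)"
proof (rule ext)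
  fix w
  have "ser_mul (liftc X p q) B n w = (\<Sum>m\<le>n. (if m = 0 then X p q * B n w else 0))"
    unfolding liftc_def ser_mul_cser_left psum_apply by (rule sum.cong) auto
  then show "ser_mul (liftc X p q) B n w = psmul (X p q) (B n) w" by (simp add: sum.delta)
qed
lemma ser_mul_liftc_right: "ser_mul B (liftc X p q) n = psmul (X p q) (B n)"
proof (rule ext)
  fix w
  have "ser_mul B (liftc X p q) n w = (\<Sum>m\<le>n. (if m = n then X p q * B n w else 0))"
    unfolding liftc_def ser_mul_cser_right psum_apply by (rule sum.cong) auto
  then show "ser_mul B (liftc X p q) n w = psmul (X p q) (B n) w" by (simp add: sum.delta)
qed

lemma Mfac_eq: "Mfac sympl s r = cser (\<lambda>k. Mc sympl k s r)"
  by (simp add: Mfac_def Mc_def)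

definition Dser :: "bool \<Rightarrow> nat \<Rightarrow> fa" where
  "Dser sympl m = psub (sser sympl 1 1 m) (sser sympl (-1) (-1) m)"

lemma sigma1_eq: "sigma1 sympl n = psum (\<lambda>m. psmul (ff sympl (n - m)) (Dser sympl m)) {..n}"
proof (rule ext)
  fix w
  define x where "x m i j = sser sympl i j m w" for m i j
  have S1w: "S1 sympl t s m w = (if snd t = snd s then x m (fst t) (fst s) else 0)" for t s m
    by (simp add: S1_def x_def)
  have "sigma1 sympl n w = (\<Sum>p\<in>idx2. \<Sum>r\<in>idx2. F11_2 r p * (\<Sum>s\<in>idx2. \<Sum>m\<le>n. Mc sympl (n - m) s r *
            (\<Sum>t\<in>idx2. A2 p t * S1 sympl t s m w)))"
    by (simp add: sigma1_def mtr_def ser_sum_def mmul_def ser_mul_liftc_left ser_mul_liftc_right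
        Mfac_eq ser_mul_cser_right)
  also have "\<dots> = (\<Sum>m\<le>n. \<Sum>p\<in>idx2. \<Sum>r\<in>idx2. F11_2 r p * (\<Sum>s\<in>idx2. Mc sympl (n - m) s r *
            (\<Sum>t\<in>idx2. A2 p t * (if snd t = snd s then x m (fst t) (fst s) else 0))))"
    by (simp add: S1w sum_distrib_left sum.swap[of _ "{..n}"])
  also have "\<dots> = (\<Sum>m\<le>n. ff sympl (n - m) * (x m 1 1 - x m (-1) (-1)))"
    by (simp only: key_scalar)
  also have "\<dots> = psum (\<lambda>m. psmul (ff sympl (n - m)) (Dser sympl m)) {..n} w"
    by (simp add: Dser_def x_def)
  finally show "sigma1 sympl n w = psum (\<lambda>m. psmul (ff sympl (n - m)) (Dser sympl m)) {..n} w" .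
qed


lemma sser_eq: "sser sympl i j M = psum (\<lambda>a. psmul (theta sympl a j)
     (psum (\<lambda>m. psmul ((-1)^(M-m)) (pmul (tt i a m) (tt (-j) (-a) (M-m)))) {..M})) idx"
  by (simp add: sser_def ser_sum_def ser_smul_def ser_mul_def tser_def tnser_def pmul_psmul_right)

definition Cc :: "int \<Rightarrow> int \<Rightarrow> int \<Rightarrow> int \<Rightarrow> nat \<Rightarrow> fa" where
  "Cc i j k l N = psum (\<lambda>r. psmul ((-1)^(N-r)) (comm (tt i j r) (tt k l (N-r)))) {..N}"
definition Bc :: "int \<Rightarrow> int \<Rightarrow> int \<Rightarrow> int \<Rightarrow> nat \<Rightarrow> fa" where
  "Bc i j k l N = psum (\<lambda>r. psmul ((-1)^(N-r)) (psub (pmul (tt k j r) (tt i l (N-r)))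
      (pmul (tt k j (N-r)) (tt i l r)))) {..N}"

lemma rev_sign:
  fixes g :: "nat \<Rightarrow> nat \<Rightarrow> complex"
  shows "(-1)^M * (\<Sum>m\<le>M. (-1)^(M-m) * g m (M-m)) = (\<Sum>r\<le>M. (-1)^(M-r) * g (M-r) r)"
proof -
  have "(\<Sum>m\<le>M. (-1)^(M-m) * g m (M-m)) = (\<Sum>r\<le>M. (-1)^(M-(M-r)) * g (M-r) (M-(M-r)))"
    by (rule sum_atMost_rev)
  also have "\<dots> = (\<Sum>r\<le>M. (-1)^r * g (M-r) r)"
    by (rule sum.cong) auto
  finally have "(-1)^M * (\<Sum>m\<le>M. (-1)^(M-m) * g m (M-m)) = (\<Sum>r\<le>M. (-1)^M * (-1)^r * g (M-r) r)"
    by (simp add: sum_distrib_left mult.assoc)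
  also have "\<dots> = (\<Sum>r\<le>M. (-1)^(M-r) * g (M-r) r)"
  proof (rule sum.cong)
    fix r assume "r \<in> {..M}"
    then have "M = (M - r) + r" by simp
    then have "(-1::complex)^M * (-1)^r = (-1)^(M-r) * ((-1)^r * (-1)^r)"
      by (metis power_add mult.assoc)
    also have "\<dots> = (-1)^(M-r)" by (simp flip: power_add add: power_mult[symmetric])
    finally show "(-1)^M * (-1)^r * g (M-r) r = (-1)^(M-r) * g (M-r) r" by simp
  qed simp
  finally show ?thesis .
qed

lemma sym_i: "psub (sser sympl 1 1 M) (psmul ((-1)^M) (sser sympl (-1) (-1) M))
   = psum (\<lambda>a. psmul (theta sympl a 1) (Cc 1 a (-1) (-a) M)) idx"
proof (rule ext)
  fix w
  define P where "P i j k l r s = pmul (tt i j r) (tt k l s) w" for i j k l r s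
  have R: "(-1)^M * (\<Sum>m\<le>M. (-1)^(M-m) * P i j k l m (M-m)) = (\<Sum>r\<le>M. (-1)^(M-r) * P i j k l (M-r) r)"
    for i j k l using rev_sign[of M "P i j k l"] by simp
  show "psub (sser sympl 1 1 M) (psmul ((-1)^M) (sser sympl (-1) (-1) M)) w
   = psum (\<lambda>a. psmul (theta sympl a 1) (Cc 1 a (-1) (-a) M)) idx w"
    apply (simp add: sser_eq Cc_def comm_def idx_def flip: P_def)
    apply (simp only: right_diff_distrib sum_subtractf distrib_left flip: R)
    apply (cases sympl; simp add: theta_def algebra_simps)
    done
qed

definition eps :: "bool \<Rightarrow> complex" where "eps sympl = (if sympl then -1 else 1)"

lemma sym_ii: "psum (\<lambda>a. psmul (theta sympl a 1) (Bc 1 a (-1) (-a) N)) idx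
   = psmul (eps sympl) (psub (sser sympl (-1) (-1) N) (psmul ((-1)^N) (sser sympl (-1) (-1) N)))"
proof (rule ext)
  fix w
  define P where "P i j k l r s = pmul (tt i j r) (tt k l s) w" for i j k l r s
  have R: "(-1)^N * (\<Sum>m\<le>N. (-1)^(N-m) * P i j k l m (N-m)) = (\<Sum>r\<le>N. (-1)^(N-r) * P i j k l (N-r) r)"
    for i j k l using rev_sign[of N "P i j k l"] by simp
  show "psum (\<lambda>a. psmul (theta sympl a 1) (Bc 1 a (-1) (-a) N)) idx w
   = psmul (eps sympl) (psub (sser sympl (-1) (-1) N) (psmul ((-1)^N) (sser sympl (-1) (-1) N))) w"
    apply (simp add: sser_eq Bc_def idx_def flip: P_def)
    apply (simp only: right_diff_distrib sum_subtractf distrib_left flip: R)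
    apply (cases sympl; simp add: theta_def eps_def algebra_simps)
    done
qed

lemma alt_sum:
  fixes c :: "nat \<Rightarrow> complex"
  assumes "c 0 = 0" "c (Suc N) = 0"
  shows "(\<Sum>r\<le>N. (-1)^(N-r) * (c (Suc r) - c r)) = 2 * (\<Sum>r\<le>Suc N. (-1)^(Suc N - r) * c r)"
proof -
  have e1: "(\<Sum>r\<le>Suc N. (-1)^(Suc N - r) * c r) = (\<Sum>r\<le>N. (-1)^(N-r) * c (Suc r))"
    by (subst sum.atMost_Suc_shift) (simp add: assms)
  have e2: "(\<Sum>r\<le>Suc N. (-1)^(Suc N - r) * c r) = - (\<Sum>r\<le>N. (-1)^(N-r) * c r)"
  proof -
    have "(\<Sum>r\<le>Suc N. (-1)^(Suc N - r) * c r) = (\<Sum>r\<le>N. (-1)^(Suc N - r) * c r)"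
      by (simp add: assms)
    also have "\<dots> = (\<Sum>r\<le>N. - ((-1)^(N - r) * c r))"
      by (rule sum.cong) (auto simp: Suc_diff_le)
    finally show ?thesis by (simp add: sum_negf)
  qed
  show ?thesis using e1 e2 by (simp add: right_diff_distrib sum_subtractf)
qed

lemma comm_pone_left[simp]: "comm pone x = pzero" by (simp add: comm_def psub_def pzero_def)
lemma comm_pone_right[simp]: "comm x pone = pzero" by (simp add: comm_def psub_def pzero_def)
lemma comm_pzero_left[simp]: "comm pzero x = pzero" by (rule ext) (simp add: comm_def)
lemma comm_pzero_right[simp]: "comm x pzero = pzero" by (rule ext) (simp add: comm_def)

lemma rtt_sum: "psum (\<lambda>r. psmul ((-1)^(N-r)) (yrel i j k l r (N-r))) {..N}
   = psub (psmul 2 (Cc i j k l (Suc N))) (Bc i j k l N)"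
proof (rule ext)
  fix w
  define c where "c r = comm (tt i j r) (tt k l (Suc N - r)) w" for r
  have c0: "c 0 = 0" by (simp add: c_def tt_def)
  have cS: "c (Suc N) = 0" by (simp add: c_def tt_def)
  have "psum (\<lambda>r. psmul ((-1)^(N-r)) (yrel i j k l r (N-r))) {..N} w
     = (\<Sum>r\<le>N. (-1)^(N-r) * (c (Suc r) - c r)) - Bc i j k l N w"
    unfolding Bc_def psum_apply psmul_apply sum_subtractf[symmetric]
    by (rule sum.cong) (auto simp: yrel_def c_def Suc_diff_le right_diff_distrib)
  also have "\<dots> = 2 * (\<Sum>r\<le>Suc N. (-1)^(Suc N - r) * c r) - Bc i j k l N w"
    by (simp only: alt_sum[OF c0 cS])
  also have "\<dots> = psub (psmul 2 (Cc i j k l (Suc N))) (Bc i j k l N) w"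
    unfolding Cc_def c_def psub_apply psmul_apply psum_apply by (rule refl)
  finally show "psum (\<lambda>r. psmul ((-1)^(N-r)) (yrel i j k l r (N-r))) {..N} w
   = psub (psmul 2 (Cc i j k l (Suc N))) (Bc i j k l N) w" .
qed


lemma fpolyI: "finite {w. p w \<noteq> 0} \<Longrightarrow> (\<And>w. p w \<noteq> 0 \<Longrightarrow> set w \<subseteq> gens) \<Longrightarrow> p \<in> fpoly"
  by (auto simp: fpoly_def)
lemma fpolyD1: "p \<in> fpoly \<Longrightarrow> finite {w. p w \<noteq> 0}" by (auto simp: fpoly_def)
lemma fpolyD2: "p \<in> fpoly \<Longrightarrow> p w \<noteq> 0 \<Longrightarrow> set w \<subseteq> gens" by (auto simp: fpoly_def)

lemma fpoly_pzero[simp]: "pzero \<in> fpoly" by (simp add: fpoly_def pzero_def)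
lemma fpoly_pone[simp]: "pone \<in> fpoly" by (simp add: fpoly_def pone_def)
lemma fpoly_padd: assumes "p \<in> fpoly" "q \<in> fpoly" shows "padd p q \<in> fpoly"
proof (rule fpolyI)
  show "finite {w. padd p q w \<noteq> 0}"
    by (rule finite_subset[of _ "{w. p w \<noteq> 0} \<union> {w. q w \<noteq> 0}"]) (use assms in \<open>auto dest: fpolyD1\<close>)
next
  fix w assume "padd p q w \<noteq> 0"
  then have "p w \<noteq> 0 \<or> q w \<noteq> 0" by auto
  then show "set w \<subseteq> gens" using assms fpolyD2 by blast
qed
lemma fpoly_psmul: "p \<in> fpoly \<Longrightarrow> psmul c p \<in> fpoly"
  apply (rule fpolyI)
   apply (rule finite_subset[of _ "{w. p w \<noteq> 0}"])
    apply (auto dest: fpolyD1 fpolyD2)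
  done
lemma fpoly_psub: "p \<in> fpoly \<Longrightarrow> q \<in> fpoly \<Longrightarrow> psub p q \<in> fpoly"
proof -
  assume "p \<in> fpoly" "q \<in> fpoly"
  moreover have "psub p q = padd p (psmul (-1) q)" by (rule ext) simp
  ultimately show ?thesis by (simp add: fpoly_padd fpoly_psmul)
qed
lemma fpoly_psum: "finite A \<Longrightarrow> (\<And>x. x \<in> A \<Longrightarrow> F x \<in> fpoly) \<Longrightarrow> psum F A \<in> fpoly"
proof (induction A rule: finite_induct)
  case empty
  have "psum F {} = pzero" by (rule ext) simp
  then show ?case using fpoly_pzero by metis
next
  case (insert x A)
  have "psum F (insert x A) = padd (F x) (psum F A)" by (rule ext) (simp add: insert)
  then show ?case using insert fpoly_padd by (metis insertI1 insertCI)
qed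
lemma fpoly_pmul: assumes "p \<in> fpoly" "q \<in> fpoly" shows "pmul p q \<in> fpoly"
proof (rule fpolyI)
  have "{w. pmul p q w \<noteq> 0} \<subseteq> (\<lambda>(u,v). u @ v) ` ({u. p u \<noteq> 0} \<times> {v. q v \<noteq> 0})"
  proof
    fix w assume "w \<in> {w. pmul p q w \<noteq> 0}"
    then obtain k where "p (take k w) * q (drop k w) \<noteq> 0"
      by (auto simp: pmul_def elim: sum.not_neutral_contains_not_neutral)
    then show "w \<in> (\<lambda>(u,v). u @ v) ` ({u. p u \<noteq> 0} \<times> {v. q v \<noteq> 0})"
      by (auto intro!: image_eqI[where x="(take k w, drop k w)"])
  qed
  then show "finite {w. pmul p q w \<noteq> 0}"
    by (rule finite_subset) (use assms in \<open>auto dest: fpolyD1\<close>)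
next
  fix w assume "pmul p q w \<noteq> 0"
  then obtain k where k: "p (take k w) * q (drop k w) \<noteq> 0"
    by (auto simp: pmul_def elim: sum.not_neutral_contains_not_neutral)
  then have "set (take k w) \<subseteq> gens" "set (drop k w) \<subseteq> gens"
    using assms by (auto dest: fpolyD2)
  then show "set w \<subseteq> gens" by (metis Un_subset_iff append_take_drop_id set_append)
qed

lemma fpoly_pgen: "g \<in> gens \<Longrightarrow> pgen g \<in> fpoly"
  by (auto simp: fpoly_def pgen_def)
lemma fpoly_tt: "i \<in> idx \<Longrightarrow> j \<in> idx \<Longrightarrow> tt i j r \<in> fpoly"
  by (auto simp: tt_def gens_def intro!: fpoly_pgen)

lemma idx_neg: "i \<in> idx \<Longrightarrow> - i \<in> idx" by (auto simp: idx_def)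
lemma finite_idx[simp]: "finite idx" by (simp add: idx_def)

lemma fpoly_sser: "i \<in> idx \<Longrightarrow> j \<in> idx \<Longrightarrow> sser sympl i j M \<in> fpoly"
  unfolding sser_eq
  by (intro fpoly_psum fpoly_psmul fpoly_pmul fpoly_tt idx_neg finite_idx finite_atMost) auto

lemma fpoly_Dser: "Dser sympl m \<in> fpoly"
  unfolding Dser_def by (intro fpoly_psub fpoly_sser) (auto simp: idx_def)

lemma fpoly_sigma1: "sigma1 sympl n \<in> fpoly"
  unfolding sigma1_eq by (intro fpoly_psum fpoly_psmul fpoly_Dser finite_atMost)

lemma I_psub: "p \<in> yideal \<Longrightarrow> q \<in> yideal \<Longrightarrow> psub p q \<in> yideal"
proof -
  assume "p \<in> yideal" "q \<in> yideal"
  moreover have "psub p q = padd p (psmul (-1) q)" by (rule ext) simp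
  ultimately show ?thesis by (simp add: yideal.add yideal.smul)
qed
lemma I_lin2: "X \<in> yideal \<Longrightarrow> Y \<in> yideal \<Longrightarrow> (\<And>w. Z w = a * X w + b * Y w) \<Longrightarrow> Z \<in> yideal"
proof -
  assume "X \<in> yideal" "Y \<in> yideal" and h: "\<And>w. Z w = a * X w + b * Y w"
  have "Z = padd (psmul a X) (psmul b Y)" by (rule ext) (simp add: h)
  then show ?thesis using \<open>X \<in> yideal\<close> \<open>Y \<in> yideal\<close> by (simp add: yideal.add yideal.smul)
qed
lemma I_psum: "finite A \<Longrightarrow> (\<And>x. x \<in> A \<Longrightarrow> F x \<in> yideal) \<Longrightarrow> psum F A \<in> yideal"
proof (induction A rule: finite_induct)
  case empty
  have "psum F {} = pzero" by (rule ext) simp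
  then show ?case using yideal.zero by metis
next
  case (insert x A)
  have "psum F (insert x A) = padd (F x) (psum F A)" by (rule ext) (simp add: insert)
  then show ?case using insert yideal.add by (metis insertI1 insertCI)
qed

lemma yrel_in: "i \<in> idx \<Longrightarrow> j \<in> idx \<Longrightarrow> k \<in> idx \<Longrightarrow> l \<in> idx \<Longrightarrow> yrel i j k l r s \<in> yideal"
  by (rule yideal.rel) (unfold relators_def, blast)

lemma rtt_in: "i \<in> idx \<Longrightarrow> j \<in> idx \<Longrightarrow> k \<in> idx \<Longrightarrow> l \<in> idx \<Longrightarrow>
   psub (psmul 2 (Cc i j k l (Suc N))) (Bc i j k l N) \<in> yideal"
  unfolding rtt_sum[symmetric]
  by (intro I_psum finite_atMost yideal.smul yrel_in)

abbreviation s11 where "s11 sympl \<equiv> sser sympl 1 1"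
abbreviation sm where "sm sympl \<equiv> sser sympl (-1) (-1)"

lemma symrel: "psub (psmul 2 (psub (s11 sympl (Suc N)) (psmul ((-1)^Suc N) (sm sympl (Suc N)))))
   (psmul (eps sympl) (psub (sm sympl N) (psmul ((-1)^N) (sm sympl N)))) \<in> yideal"
proof -
  have "psum (\<lambda>a. psmul (theta sympl a 1) (psub (psmul 2 (Cc 1 a (-1) (-a) (Suc N))) (Bc 1 a (-1) (-a) N))) idx \<in> yideal"
    by (intro I_psum finite_idx yideal.smul rtt_in) (auto simp: idx_def)
  moreover have "psum (\<lambda>a. psmul (theta sympl a 1) (psub (psmul 2 (Cc 1 a (-1) (-a) (Suc N))) (Bc 1 a (-1) (-a) N))) idx
     = psub (psmul 2 (psum (\<lambda>a. psmul (theta sympl a 1) (Cc 1 a (-1) (-a) (Suc N))) idx))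
            (psum (\<lambda>a. psmul (theta sympl a 1) (Bc 1 a (-1) (-a) N)) idx)"
    by (rule ext) (simp add: idx_def algebra_simps)
  ultimately show ?thesis by (simp only: sym_i sym_ii)
qed

lemma odd_rel: "padd (s11 sympl (2*m+1)) (sm sympl (2*m+1)) \<in> yideal"
  using symrel[of sympl "2*m"]
  by (rule I_lin2[OF _ yideal.zero, where a="1/2" and b=0]) simp

lemma even_rel: "psub (Dser sympl (2*m+2)) (psmul (- eps sympl) (s11 sympl (2*m+1))) \<in> yideal"
  using symrel[of sympl "2*m+1"] odd_rel[of sympl m]
  by (rule I_lin2[where a="1/2" and b="eps sympl"]) (simp add: Dser_def algebra_simps)

lemma odd_rel2: "psub (Dser sympl (2*m+1)) (psmul 2 (s11 sympl (2*m+1))) \<in> yideal"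
  using odd_rel[of sympl m] yideal.zero
  by (rule I_lin2[where a="-1" and b=0]) (simp add: Dser_def algebra_simps)


declare psub_apply[simp del] padd_apply[simp del] psmul_apply[simp del] psum_apply[simp del] pzero_apply[simp del]
lemmas papp = psub_apply padd_apply psmul_apply psum_apply pzero_apply

lemma falg_fpoly: "p \<in> falg Y \<Longrightarrow> Y \<subseteq> fpoly \<Longrightarrow> p \<in> fpoly"
  by (induction p rule: falg.induct) (auto intro: fpoly_padd fpoly_psmul fpoly_pmul)

lemma falg_mono: "p \<in> falg Y \<Longrightarrow> Y \<subseteq> Y' \<Longrightarrow> p \<in> falg Y'"
  by (induction p rule: falg.induct) (auto intro: falg.intros)

lemma ygen_fpoly: "p \<in> ygen Y \<Longrightarrow> p \<in> fpoly" by (simp add: ygen_def)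

lemma psub_self: "psub p p = pzero" by (rule ext) (simp add: papp)

lemma ygen_gen: "x \<in> Y \<Longrightarrow> x \<in> fpoly \<Longrightarrow> x \<in> ygen Y"
proof -
  assume "x \<in> Y" "x \<in> fpoly"
  moreover have "psub x x \<in> yideal" using psub_self[of x] yideal.zero by simp
  ultimately show ?thesis unfolding ygen_def using falg.gen by blast
qed

lemma ygen_equiv: "p \<in> fpoly \<Longrightarrow> q \<in> ygen Y \<Longrightarrow> psub p q \<in> yideal \<Longrightarrow> p \<in> ygen Y"
proof -
  assume p: "p \<in> fpoly" and "q \<in> ygen Y" and pq: "psub p q \<in> yideal"
  then obtain q' where q': "q' \<in> falg Y" "psub q q' \<in> yideal" by (auto simp: ygen_def)
  have "psub p q' = padd (psub p q) (psub q q')" by (rule ext) (simp add: papp)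
  then have "psub p q' \<in> yideal" using pq q' yideal.add by metis
  then show ?thesis using p q' by (auto simp: ygen_def)
qed

lemma ygen_padd: "p \<in> ygen Y \<Longrightarrow> q \<in> ygen Y \<Longrightarrow> padd p q \<in> ygen Y"
proof -
  assume "p \<in> ygen Y" "q \<in> ygen Y"
  then obtain p' q' where "p \<in> fpoly" "q \<in> fpoly" "p' \<in> falg Y" "q' \<in> falg Y"
     "psub p p' \<in> yideal" "psub q q' \<in> yideal" by (auto simp: ygen_def)
  moreover have "psub (padd p q) (padd p' q') = padd (psub p p') (psub q q')" by (rule ext) (simp add: papp)
  ultimately have "padd p q \<in> fpoly" "padd p' q' \<in> falg Y" "psub (padd p q) (padd p' q') \<in> yideal"
    by (simp_all add: fpoly_padd falg.add yideal.add)
  then show ?thesis unfolding ygen_def by blast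
qed

lemma ygen_psmul: "p \<in> ygen Y \<Longrightarrow> psmul c p \<in> ygen Y"
proof -
  assume "p \<in> ygen Y"
  then obtain p' where "p \<in> fpoly" "p' \<in> falg Y" "psub p p' \<in> yideal" by (auto simp: ygen_def)
  moreover have "psub (psmul c p) (psmul c p') = psmul c (psub p p')" by (rule ext) (simp add: papp algebra_simps)
  ultimately have "psmul c p \<in> fpoly" "psmul c p' \<in> falg Y" "psub (psmul c p) (psmul c p') \<in> yideal"
    by (simp_all add: fpoly_psmul falg.smul yideal.smul)
  then show ?thesis unfolding ygen_def by blast
qed

lemma ygen_pzero: "pzero \<in> ygen Y"
proof -
  have "pzero = psmul 0 pone" by (rule ext) (simp add: papp)
  moreover have "pone \<in> ygen Y"
  proof -
    have "psub pone pone \<in> yideal" using psub_self[of pone] yideal.zero by simp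
    then show ?thesis unfolding ygen_def using falg.one[of Y] fpoly_pone by blast
  qed
  ultimately show ?thesis using ygen_psmul by metis
qed

lemma ygen_psub: "p \<in> ygen Y \<Longrightarrow> q \<in> ygen Y \<Longrightarrow> psub p q \<in> ygen Y"
proof -
  assume "p \<in> ygen Y" "q \<in> ygen Y"
  moreover have "psub p q = padd p (psmul (-1) q)" by (rule ext) (simp add: papp)
  ultimately show ?thesis by (metis ygen_padd ygen_psmul)
qed

lemma ygen_psum: "finite A \<Longrightarrow> (\<And>x. x \<in> A \<Longrightarrow> F x \<in> ygen Y) \<Longrightarrow> psum F A \<in> ygen Y"
proof (induction A rule: finite_induct)
  case empty
  have "psum F {} = pzero" by (rule ext) (simp add: papp)
  then show ?case using ygen_pzero by metis
next
  case (insert x A)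
  have "psum F (insert x A) = padd (F x) (psum F A)" by (rule ext) (simp add: papp insert)
  then show ?case using insert ygen_padd by (metis insertI1 insertCI)
qed

lemma ygen_mono: "Y \<subseteq> Y' \<Longrightarrow> ygen Y \<subseteq> ygen Y'"
  unfolding ygen_def using falg_mono by blast

lemma ygen_transfer:
  assumes XY: "X \<subseteq> ygen Y" and Yf: "Y \<subseteq> fpoly"
  shows "ygen X \<subseteq> ygen Y"
proof -
  have Xf: "X \<subseteq> fpoly" using XY ygen_fpoly by blast
  have key: "\<exists>q\<in>falg Y. psub p q \<in> yideal" if "p \<in> falg X" for p
    using that
  proof (induction p rule: falg.induct)
    case one
    have "psub pone pone \<in> yideal" using psub_self[of pone] yideal.zero by simp
    then show ?case using falg.one by blast
  next
    case (gen x)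
    then show ?case using XY by (auto simp: ygen_def)
  next
    case (add p q)
    then obtain p' q' where "p' \<in> falg Y" "q' \<in> falg Y" "psub p p' \<in> yideal" "psub q q' \<in> yideal" by blast
    moreover have "psub (padd p q) (padd p' q') = padd (psub p p') (psub q q')" by (rule ext) (simp add: papp)
    ultimately show ?case by (metis falg.add yideal.add)
  next
    case (smul p c)
    then obtain p' where "p' \<in> falg Y" "psub p p' \<in> yideal" by blast
    moreover have "psub (psmul c p) (psmul c p') = psmul c (psub p p')" by (rule ext) (simp add: papp algebra_simps)
    ultimately show ?case by (metis falg.smul yideal.smul)
  next
    case (mul p q)
    then obtain p' q' where pq: "p' \<in> falg Y" "q' \<in> falg Y" "psub p p' \<in> yideal" "psub q q' \<in> yideal" by blast
    have qf: "q \<in> fpoly" using falg_fpoly[OF mul.hyps(2) Xf] .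
    have pf: "p' \<in> fpoly" using falg_fpoly[OF pq(1) Yf] .
    have "psub (pmul p q) (pmul p' q') = padd (pmul (psub p p') q) (pmul p' (psub q q'))"
      by (simp add: pmul_psub_left pmul_psub_right) (rule ext, simp add: papp)
    moreover have "pmul (psub p p') q \<in> yideal" using pq(3) qf yideal.rmul by blast
    moreover have "pmul p' (psub q q') \<in> yideal" using pq(4) pf yideal.lmul by blast
    ultimately show ?case using pq falg.mul yideal.add by metis
  qed
  show ?thesis
  proof
    fix p assume "p \<in> ygen X"
    then obtain q where q: "p \<in> fpoly" "q \<in> falg X" "psub p q \<in> yideal" by (auto simp: ygen_def)
    obtain q' where "q' \<in> falg Y" "psub q q' \<in> yideal" using key[OF q(2)] by blast
    moreover have "psub p q' = padd (psub p q) (psub q q')" by (rule ext) (simp add: papp)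
    ultimately have "psub p q' \<in> yideal" using q yideal.add by metis
    then show "p \<in> ygen Y" using q \<open>q' \<in> falg Y\<close> unfolding ygen_def by blast
  qed
qed


lemma ZY_fpoly: "ZYpm sympl \<subseteq> fpoly"
  by (auto simp: ZYpm_def Ypm_def ygen_def)

lemma s11_fpoly: "s11 sympl M \<in> fpoly" by (rule fpoly_sser) (auto simp: idx_def)

lemma Dser0: "Dser sympl 0 = pzero"
  by (rule ext) (simp add: papp Dser_def sser_eq idx_def tt_def theta_def)

lemma ff0: "ff sympl 0 = - 1/2" by (simp add: ff_def cc_def)

lemma D_in_odd:
  "Dser sympl m \<in> ygen (ZYpm sympl \<union> {s11 sympl (2 * k + 1) | k. True})" (is "_ \<in> ygen ?Y")
proof -
  have g: "s11 sympl (2*k+1) \<in> ygen ?Y" for k by (rule ygen_gen) (auto simp: s11_fpoly)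
  have "m = 0 \<or> (\<exists>k. m = 2*k+1) \<or> (\<exists>k. m = 2*k+2)" by presburger
  then show ?thesis
  proof (elim disjE exE)
    assume "m = 0" then show ?thesis using ygen_pzero by (simp add: Dser0)
  next
    fix k assume m: "m = 2*k+1"
    show ?thesis unfolding m
      by (rule ygen_equiv[OF fpoly_Dser ygen_psmul[OF g] odd_rel2])
  next
    fix k assume m: "m = 2*k+2"
    show ?thesis unfolding m
      by (rule ygen_equiv[OF fpoly_Dser ygen_psmul[OF g] even_rel])
  qed
qed

lemma D_rec: "Dser sympl m = psmul (-2) (psub (sigma1 sympl m) (psum (\<lambda>j. psmul (ff sympl (m - j)) (Dser sympl j)) {..<m}))"
proof (rule ext)
  fix w
  have "sigma1 sympl m w = ff sympl 0 * Dser sympl m w + (\<Sum>j<m. ff sympl (m - j) * Dser sympl j w)"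
    by (simp add: sigma1_eq papp flip: lessThan_Suc_atMost)
  then show "Dser sympl m w = psmul (-2) (psub (sigma1 sympl m) (psum (\<lambda>j. psmul (ff sympl (m - j)) (Dser sympl j)) {..<m})) w"
    by (simp add: papp ff0)
qed

lemma D_in_sigma: "Dser sympl m \<in> ygen (ZYpm sympl \<union> range (sigma1 sympl))" (is "_ \<in> ygen ?Y")
proof (induction m rule: less_induct)
  case (less m)
  have "sigma1 sympl m \<in> ygen ?Y" by (rule ygen_gen) (auto simp: fpoly_sigma1)
  moreover have "psum (\<lambda>j. psmul (ff sympl (m - j)) (Dser sympl j)) {..<m} \<in> ygen ?Y"
    by (intro ygen_psum ygen_psmul finite_lessThan less.IH) simp
  ultimately show ?case by (subst D_rec) (intro ygen_psmul ygen_psub)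
qed

theorem proposition3:
  fixes sympl :: bool
  shows "ygen (ZYpm sympl \<union> range (sigma1 sympl))
       = ygen (ZYpm sympl \<union> {sser sympl 1 1 (2 * m + 1) | m. True})"
proof
  show "ygen (ZYpm sympl \<union> range (sigma1 sympl)) \<subseteq> ygen (ZYpm sympl \<union> {sser sympl 1 1 (2 * m + 1) | m. True})"
  proof (rule ygen_transfer)
    show "ZYpm sympl \<union> {sser sympl 1 1 (2 * m + 1) | m. True} \<subseteq> fpoly"
      using ZY_fpoly s11_fpoly by blast
    show "ZYpm sympl \<union> range (sigma1 sympl) \<subseteq> ygen (ZYpm sympl \<union> {sser sympl 1 1 (2 * m + 1) | m. True})"
    proof
      fix x assume "x \<in> ZYpm sympl \<union> range (sigma1 sympl)"
      then show "x \<in> ygen (ZYpm sympl \<union> {sser sympl 1 1 (2 * m + 1) | m. True})"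
      proof
        assume "x \<in> ZYpm sympl" then show ?thesis using ZY_fpoly by (intro ygen_gen) auto
      next
        assume "x \<in> range (sigma1 sympl)"
        then obtain n where x: "x = sigma1 sympl n" by auto
        show ?thesis unfolding x sigma1_eq
          by (intro ygen_psum ygen_psmul finite_atMost D_in_odd)
      qed
    qed
  qed
next
  show "ygen (ZYpm sympl \<union> {sser sympl 1 1 (2 * m + 1) | m. True}) \<subseteq> ygen (ZYpm sympl \<union> range (sigma1 sympl))"
  proof (rule ygen_transfer)
    show "ZYpm sympl \<union> range (sigma1 sympl) \<subseteq> fpoly"
      using ZY_fpoly fpoly_sigma1 by blast
    show "ZYpm sympl \<union> {sser sympl 1 1 (2 * m + 1) | m. True} \<subseteq> ygen (ZYpm sympl \<union> range (sigma1 sympl))"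
    proof
      fix x assume "x \<in> ZYpm sympl \<union> {sser sympl 1 1 (2 * m + 1) | m. True}"
      then show "x \<in> ygen (ZYpm sympl \<union> range (sigma1 sympl))"
      proof
        assume "x \<in> ZYpm sympl" then show ?thesis using ZY_fpoly by (intro ygen_gen) auto
      next
        assume "x \<in> {sser sympl 1 1 (2 * m + 1) | m. True}"
        then obtain k where x: "x = s11 sympl (2*k+1)" by auto
        have "psub (s11 sympl (2*k+1)) (psmul (1/2) (Dser sympl (2*k+1))) \<in> yideal"
          using odd_rel2[of sympl k] yideal.zero
          by (rule I_lin2[where a="-1/2" and b=0]) (simp add: papp field_simps)
        then show ?thesis unfolding x
          by (rule ygen_equiv[OF s11_fpoly ygen_psmul[OF D_in_sigma]])
      qed
    qed
  qed
qed

end
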